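(* Let $n\ge 1$ and let $\mathbf{c}=(c_1,\dots,c_n)$ be a cover object whose joint distribution $P_c$ is a correlated multivariate quantized Gaussian distribution (CMQGD) with mean vector $\vec{\mu_c}$ and positive definite covariance matrix $\Sigma_c$, these parameters being known to the sender, the receiver and the eavesdropper. Let the stego-object be $\mathbf{s}=\mathbf{c}+\mathbf{m}$, where the coded message $\mathbf{m}$ has distribution $P_m$, and suppose the stego distribution $P_s$ is a CMQGD with parameters $(\vec{\mu_s},\Sigma_s)$. Use the entropy approximation $H(P)\approx \tfrac12\ln(2\pi e|\Sigma|)+b$ for a CMQGD with covariance $\Sigma$ quantized with $b$ bits, and take the KL-divergence to be $$\mathcal{D}(P_s\parallel P_c)=\tfrac12\Big(\mathrm{tr}(\Sigma_c^{-1}\Sigma_s)+(\vec{\mu_c}-\vec{\mu_s})^T\Sigma_c^{-1}(\vec{\mu_c}-\vec{\mu_s})+\ln\tfrac{|\Sigma_c|}{|\Sigma_s|}-n\Big).$$ Consider the optimization problem of maximizing $H(P_s)$ over $P_m$ subject to $\mathcal{D}(P_s\parallel P_c)\le 2\epsilon^2$, for a design parameter $\epsilon>0$ limiting the detection capability of the optimal steganalysis detector (i.e. $P_D\le\sqrt{\mathcal{D}(P_s\parallel P_c)/2}\le\epsilon$). Then: (1) the solution is achieved when $P_m$ is a CMQGD with mean $\vec{\mu_m}=0$ and covariance $\Sigma_m=\big(-W(-\tfrac{4\epsilon^2}{n}-1-i\pi)-1\big)\Sigma_c$, where $W$ is the WrightOmega function; (2) the maximum achievable embedding rate is $I(P_s;P_m)\approx\frac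 n2\ln\big(-W(-\tfrac{4\epsilon^2}{n}-1-i\pi)\big)$ for sufficiently large $n$.
   Context: A CMQGD is a uniformly quantized version of a (correlated) multivariate Gaussian distribution. $P_D$ is the probability of correct detection by the eavesdropper's steganalysis detector performing a binary hypothesis test (no embedding vs. embedding). The embedding rate is the mutual information $I(P_s;P_m)=H(P_s)-H(P_s\mid P_m)=H(P_s)-H(P_c)$. The WrightOmega function $W(z)$ is the function satisfying $W(z)+\ln W(z)=z$, given by $W(z)=\mathcal{W}_{\lceil(\mathrm{Im}(z)-\pi)/(2\pi)\rceil}(e^z)$ where $\mathcal{W}_k$ are the branches of the Lambert W function. $|\cdot|$ denotes the determinant. *)

theory Defs
  imports "HOL-Analysis.Analysis"
begin

definition pos_def :: "real^'n^'n \<Rightarrow> bool" where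
  "pos_def A \<longleftrightarrow> transpose A = A \<and> (\<forall>x. x \<noteq> 0 \<longrightarrow> x \<bullet> (A *v x) > 0)"

definition cmqgd_entropy :: "real \<Rightarrow> real^'n^'n \<Rightarrow> real" where
  "cmqgd_entropy b S = ln (2 * pi * exp 1 * det S) / 2 + b"

definition cmqgd_KL :: "real^'n \<Rightarrow> real^'n^'n \<Rightarrow> real^'n \<Rightarrow> real^'n^'n \<Rightarrow> real" where
  "cmqgd_KL mu_s S_s mu_c S_c =
     (trace (matrix_inv S_c ** S_s)
      + (mu_c - mu_s) \<bullet> (matrix_inv S_c *v (mu_c - mu_s))
      + ln (det S_c / det S_s) - real CARD('n)) / 2"

text \<open>Only the branch needed here is specified:
  W_{-1} on the real interval [-1/e, 0) is the unique real value w \<le> -1 with w e^w = x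
  (standard convention).  Other branches / arguments are left unspecified.\<close>
definition lambertW_branch :: "int \<Rightarrow> complex \<Rightarrow> complex" where
  "lambertW_branch k x =
     (if k = -1 \<and> Im x = 0 \<and> -exp (-1) \<le> Re x \<and> Re x < 0
      then complex_of_real (THE w::real. w \<le> -1 \<and> w * exp w = Re x)
      else undefined k x)"

definition wright_omega :: "complex \<Rightarrow> complex" where
  "wright_omega z = lambertW_branch (ceiling ((Im z - pi) / (2 * pi))) (exp z)"

end

theory Submission
  imports Defs
begin


lemma ln_strict: assumes "(y::real) > 1" shows "ln y < y - 1"
proof -
  have "ln y = 2 * ln (sqrt y)" using assms by (simp add: ln_sqrt)
  also have "ln (sqrt y) \<le> sqrt y - 1" using assms by (intro ln_le_minus_one) simp
  also have "2 * (sqrt y - 1) < y - 1"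
  proof -
    have "sqrt y \<noteq> 1" using assms by simp
    then have "(sqrt y - 1)^2 > 0" by simp
    then show ?thesis using assms by (simp add: power2_eq_square algebra_simps)
  qed
  finally show ?thesis by linarith
qed

lemma h_mono: assumes "1 \<le> (x::real)" "x < y" shows "x - ln x < y - ln y"
proof -
  have "ln y - ln x = ln (y / x)" using assms by (simp add: ln_div)
  also have "\<dots> < y / x - 1" using assms by (intro ln_strict) simp
  also have "y / x - 1 = (y - x) / x" using assms by (simp add: field_simps)
  also have "\<dots> \<le> y - x" using assms by (simp add: divide_le_eq mult_le_cancel_left1)
  finally show ?thesis by linarith
qed

lemma quad_zero: assumes "\<And>t::real. 2 * t * a + t^2 * b \<le> 0" shows "a = 0"
proof (rule ccontr)
  assume "a \<noteq> 0"
  define s where "s = 1 / (\<bar>b\<bar> + 1)"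
  have s: "s > 0" "s * \<bar>b\<bar> < 1" unfolding s_def by (auto simp: field_simps)
  have "2 * (s*a) * a + (s*a)^2 * b \<le> 0" by (rule assms)
  hence "a^2 * s * (2 + s * b) \<le> 0" by (simp add: power2_eq_square algebra_simps)
  moreover have "a^2 * s * (2 + s * b) > 0"
  proof -
    have "s * b \<ge> - (s * \<bar>b\<bar>)" using s mult_left_mono[of "-b" "\<bar>b\<bar>" s] by (simp add: abs_ge_minus_self)
    hence "2 + s * b > 0" using s by linarith
    thus ?thesis using s \<open>a \<noteq> 0\<close> by simp
  qed
  ultimately show False by linarith
qed

lemma amgm_log:
  fixes \<mu> :: "'i \<Rightarrow> real" and I :: "'i set"
  assumes fin: "finite I" and ne: "I \<noteq> {}" and pos: "\<And>i. i \<in> I \<Longrightarrow> \<mu> i > 0"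
    and t: "t \<ge> 1"
    and c: "(\<Sum>i\<in>I. \<mu> i) - (\<Sum>i\<in>I. ln (\<mu> i)) - real (card I) \<le> real (card I) * (t - ln t - 1)"
  shows "(\<Sum>i\<in>I. ln (\<mu> i)) \<le> real (card I) * ln t"
proof -
  define N where "N = real (card I)"
  have N: "N > 0" using fin ne by (simp add: N_def card_gt_0_iff)
  define M where "M = (\<Sum>i\<in>I. \<mu> i) / N"
  define L where "L = (\<Sum>i\<in>I. ln (\<mu> i)) / N"
  have Mpos: "M > 0" unfolding M_def using N pos fin ne by (intro divide_pos_pos sum_pos) auto
  have "(\<Sum>i\<in>I. ln (\<mu> i)) \<le> (\<Sum>i\<in>I. \<mu> i / M - 1 + ln M)"
  proof (rule sum_mono)
    fix i assume i: "i \<in> I"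
    have "ln (\<mu> i / M) \<le> \<mu> i / M - 1" using pos[OF i] Mpos by (intro ln_le_minus_one) simp
    thus "ln (\<mu> i) \<le> \<mu> i / M - 1 + ln M" using pos[OF i] Mpos by (simp add: ln_div)
  qed
  also have "\<dots> = (\<Sum>i\<in>I. \<mu> i) / M - N + N * ln M"
    by (simp add: sum.distrib sum_subtractf sum_divide_distrib[symmetric] N_def)
  also have "\<dots> = N * ln M" using N Mpos by (simp add: M_def, simp add: field_simps)
  finally have LM: "L \<le> ln M" using N by (simp add: L_def divide_le_eq mult.commute)
  have c': "M - L - 1 \<le> t - ln t - 1"
  proof -
    have "N * (M - L - 1) \<le> N * (t - ln t - 1)" using c N
      by (simp add: M_def L_def N_def algebra_simps)
    thus ?thesis using N by simp
  qed
  have "L \<le> ln t"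
  proof (rule ccontr)
    assume "\<not> L \<le> ln t"
    hence "exp L > t" using t by (metis exp_less_cancel_iff exp_ln less_le_trans not_le zero_less_one)
    hence "t - ln t < exp L - ln (exp L)" using t by (intro h_mono) auto
    moreover have "exp L \<le> M" using LM Mpos by (metis exp_le_cancel_iff exp_ln)
    ultimately show False using c' by simp
  qed
  thus ?thesis using N by (simp add: L_def N_def divide_le_eq mult.commute)
qed



lemma sym_dot: assumes "transpose A = A" shows "x \<bullet> ((A::real^'n^'n) *v y) = (A *v x) \<bullet> y"
  by (metis assms dot_lmul_matrix transpose_matrix_vector)

lemma pos_def_inv: assumes "pos_def (A::real^'n^'n)" shows "A ** matrix_inv A = mat 1" "matrix_inv A ** A = mat 1"
proof -
  have "inj ((*v) A)"
  proof (rule injI)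
    fix x y assume "A *v x = A *v y"
    hence "A *v (x - y) = 0" by (simp add: matrix_vector_mult_diff_distrib)
    hence "(x - y) \<bullet> (A *v (x - y)) = 0" by simp
    thus "x = y" using assms unfolding pos_def_def by (metis less_irrefl right_minus_eq)
  qed
  hence "invertible A" by (simp add: invertible_eq_bij bij_def linear_injective_imp_surjective matrix_vector_mul_linear)
  thus "A ** matrix_inv A = mat 1" "matrix_inv A ** A = mat 1"
    unfolding invertible_def matrix_inv_def by (metis (mono_tags, lifting) someI)+
qed

lemma gen_eig_set:
  fixes A B :: "real^'n^'n"
  assumes A: "pos_def A" and B: "transpose B = B" and I: "finite (I::'n set)"
  shows "\<exists>v \<mu>. (\<forall>i\<in>I. \<forall>j\<in>I. v i \<bullet> (A *v v j) = (if i = j then 1 else 0))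
              \<and> (\<forall>i\<in>I. B *v v i = \<mu> i *\<^sub>R (A *v v i))"
  using I
proof (induction rule: finite_induct)
  case empty show ?case by auto
next
  case (insert k I)
  obtain v \<mu> where orth: "\<forall>i\<in>I. \<forall>j\<in>I. v i \<bullet> (A *v v j) = (if i = j then 1 else 0)"
    and eig: "\<forall>i\<in>I. B *v v i = \<mu> i *\<^sub>R (A *v v i)" using insert.IH by blast
  have As: "transpose A = A" using A by (simp add: pos_def_def)
  have Apos: "\<And>x. x \<noteq> 0 \<Longrightarrow> x \<bullet> (A *v x) > 0" using A by (simp add: pos_def_def)
  define S where "S = {x. \<forall>j\<in>I. (A *v v j) \<bullet> x = 0}"
  have subS: "subspace S"
    unfolding subspace_def S_def by (auto simp: inner_add_right)
  have "card ((\<lambda>j. A *v v j) ` I) \<le> card I" using insert.hyps by (simp add: card_image_le)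
  also have "card I < CARD('n)" using insert.hyps psubset_card_mono[of "UNIV::'n set" I] by auto
  finally have "dim ((\<lambda>j. A *v v j) ` I) < DIM(real^'n)"
    using dim_le_card'[of "(\<lambda>j. A *v v j) ` I"] insert.hyps by simp
  then obtain x0 :: "real^'n" where x0: "x0 \<noteq> 0" "\<And>y. y \<in> span ((\<lambda>j. A *v v j) ` I) \<Longrightarrow> orthogonal x0 y"
    by (rule orthogonal_to_subspace_exists) blast+
  have x0S: "x0 \<in> S" unfolding S_def
  proof (intro CollectI ballI)
    fix j assume "j \<in> I"
    hence "A *v v j \<in> span ((\<lambda>j. A *v v j) ` I)" by (intro span_base) auto
    from x0(2)[OF this] show "(A *v v j) \<bullet> x0 = 0" by (simp add: orthogonal_def inner_commute)
  qed
  define K where "K = S \<inter> sphere 0 1"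
  have Kc: "compact K" unfolding K_def using closed_subspace[OF subS] by (simp add: closed_Int_compact)
  have Kne: "K \<noteq> {}"
  proof -
    have "x0 /\<^sub>R norm x0 \<in> K" unfolding K_def using x0 x0S subspace_scale[OF subS] by auto
    thus ?thesis by auto
  qed
  define f where "f x = (x \<bullet> (B *v x)) / (x \<bullet> (A *v x))" for x
  have Kpos: "\<And>x. x \<in> K \<Longrightarrow> x \<bullet> (A *v x) > 0" using Apos unfolding K_def by (metis IntD2 mem_sphere_0 norm_zero zero_neq_one)
  have fc: "continuous_on K f" unfolding f_def
    by (intro continuous_intros) (use Kpos in force)
  obtain v0 where v0K: "v0 \<in> K" and v0max: "\<And>y. y \<in> K \<Longrightarrow> f y \<le> f v0"
    using continuous_attains_sup[OF Kc Kne fc] by blast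
  define l where "l = f v0"
  have v0S: "v0 \<in> S" and v0nz: "v0 \<noteq> 0" using v0K unfolding K_def by auto
  have c0: "v0 \<bullet> (A *v v0) > 0" using Apos v0nz by blast
  have eq0: "v0 \<bullet> (B *v v0) = l * (v0 \<bullet> (A *v v0))" using c0 by (simp add: l_def f_def)
  have le: "x \<bullet> (B *v x) \<le> l * (x \<bullet> (A *v x))" if xS: "x \<in> S" for x
  proof (cases "x = 0")
    case True thus ?thesis by simp
  next
    case False
    define y where "y = x /\<^sub>R norm x"
    have yK: "y \<in> K" unfolding K_def y_def using False xS subspace_scale[OF subS] by auto
    have "f y = f x" unfolding f_def y_def using False
      by (simp add: matrix_vector_mult_scaleR inner_scaleR_left inner_scaleR_right power2_eq_square)
    hence "f x \<le> l" using v0max[OF yK] by (simp add: l_def)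
    moreover have "x \<bullet> (A *v x) > 0" using Apos False by blast
    ultimately show ?thesis by (simp add: f_def divide_le_eq)
  qed
  have key: "w \<bullet> (B *v v0 - l *\<^sub>R (A *v v0)) = 0" if wS: "w \<in> S" for w
  proof -
    have "\<And>t::real. 2 * t * (w \<bullet> (B *v v0 - l *\<^sub>R (A *v v0))) + t^2 * (w \<bullet> (B *v w) - l * (w \<bullet> (A *v w))) \<le> 0"
    proof -
      fix t :: real
      have "v0 + t *\<^sub>R w \<in> S" using subS v0S wS by (simp add: subspace_add subspace_scale)
      from le[OF this] have "(v0 + t *\<^sub>R w) \<bullet> (B *v (v0 + t *\<^sub>R w)) \<le> l * ((v0 + t *\<^sub>R w) \<bullet> (A *v (v0 + t *\<^sub>R w)))" .
      moreover have "v0 \<bullet> (B *v w) = w \<bullet> (B *v v0)" using sym_dot[OF B] by (simp add: inner_commute)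
      moreover have "v0 \<bullet> (A *v w) = w \<bullet> (A *v v0)" using sym_dot[OF As] by (simp add: inner_commute)
      ultimately show "2 * t * (w \<bullet> (B *v v0 - l *\<^sub>R (A *v v0))) + t^2 * (w \<bullet> (B *v w) - l * (w \<bullet> (A *v w))) \<le> 0"
        using eq0 by (simp add: matrix_vector_right_distrib matrix_vector_mult_scaleR inner_add_left inner_add_right
             inner_diff_right power2_eq_square algebra_simps)
    qed
    thus ?thesis by (rule quad_zero)
  qed
  define u where "u = matrix_inv A *v (B *v v0 - l *\<^sub>R (A *v v0))"
  have Au: "A *v u = B *v v0 - l *\<^sub>R (A *v v0)"
    unfolding u_def by (simp add: matrix_vector_mul_assoc pos_def_inv[OF A])
  have uS: "u \<in> S" unfolding S_def
  proof (intro CollectI ballI)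
    fix j assume j: "j \<in> I"
    have "(A *v v j) \<bullet> u = v j \<bullet> (A *v u)" using sym_dot[OF As] by simp
    also have "\<dots> = v j \<bullet> (B *v v0) - l * (v j \<bullet> (A *v v0))" by (simp add: Au inner_diff_right)
    also have "v j \<bullet> (B *v v0) = (B *v v j) \<bullet> v0" using sym_dot[OF B] by simp
    also have "\<dots> = \<mu> j * ((A *v v j) \<bullet> v0)" using eig j by simp
    also have "v j \<bullet> (A *v v0) = (A *v v j) \<bullet> v0" using sym_dot[OF As] by simp
    finally show "(A *v v j) \<bullet> u = 0" using v0S j unfolding S_def by simp
  qed
  have "u \<bullet> (A *v u) = 0" using key[OF uS] Au by simp
  hence "u = 0" using Apos by (metis less_irrefl)
  hence Bv0: "B *v v0 = l *\<^sub>R (A *v v0)" using Au by simp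
  define c where "c = v0 \<bullet> (A *v v0)"
  define v' where "v' = (1 / sqrt c) *\<^sub>R v0"
  have v'S: "v' \<in> S" unfolding v'_def using subspace_scale[OF subS v0S] .
  have v'A: "v' \<bullet> (A *v v') = 1" unfolding v'_def using c0
    by (simp add: c_def matrix_vector_mult_scaleR)
  have v'B: "B *v v' = l *\<^sub>R (A *v v')" unfolding v'_def by (simp add: matrix_vector_mult_scaleR Bv0)
  show ?case
  proof (intro exI conjI)
    show "\<forall>i\<in>insert k I. \<forall>j\<in>insert k I. (v(k := v')) i \<bullet> (A *v (v(k := v')) j) = (if i = j then 1 else 0)"
    proof (intro ballI)
      fix i j assume i: "i \<in> insert k I" and j: "j \<in> insert k I"
      have a1: "v' \<bullet> (A *v v j) = 0" if "j \<in> I" for j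
        using v'S that sym_dot[OF As, of v' "v j"] unfolding S_def by (simp add: inner_commute)
      have a2: "v i \<bullet> (A *v v') = 0" if "i \<in> I" for i
        using v'S that sym_dot[OF As, of "v i" v'] unfolding S_def by simp
      show "(v(k := v')) i \<bullet> (A *v (v(k := v')) j) = (if i = j then 1 else 0)"
        using i j orth insert.hyps a1 a2 v'A by auto
    qed
    show "\<forall>i\<in>insert k I. B *v (v(k := v')) i = ((\<mu>(k := l)) i) *\<^sub>R (A *v (v(k := v')) i)"
      using eig v'B insert.hyps by auto
  qed
qed




lemma vtmv: "(transpose (\<chi> r j. v j $ r) ** M ** (\<chi> r j. v j $ r)) $ i $ j = v i \<bullet> ((M::real^'n^'n) *v v j)"
  apply (simp add: matrix_matrix_mult_def transpose_def matrix_vector_mult_def inner_vec_def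
      sum_distrib_left sum_distrib_right)
  apply (subst sum.swap)
  apply (simp add: mult_ac)
  done

lemma inv_unique: assumes "pos_def (A::real^'n^'n)" "A ** X = mat 1" shows "matrix_inv A = X"
proof -
  have "matrix_inv A = matrix_inv A ** (A ** X)" using assms by simp
  also have "\<dots> = (matrix_inv A ** A) ** X" by (simp add: matrix_mul_assoc)
  also have "\<dots> = X" using pos_def_inv[OF assms(1)] by simp
  finally show ?thesis .
qed

lemma gen_eig_mat:
  fixes A B :: "real^'n^'n"
  assumes A: "pos_def A" and B: "pos_def B"
  shows "\<exists>\<mu>::'n \<Rightarrow> real. (\<forall>i. \<mu> i > 0) \<and> det A > 0 \<and> det B = det A * prod \<mu> UNIV
     \<and> trace (matrix_inv A ** B) = sum \<mu> UNIV \<and> (\<forall>d. d \<bullet> (matrix_inv A *v d) \<ge> 0)"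
proof -
  have Bs: "transpose B = B" using B by (simp add: pos_def_def)
  obtain v :: "'n \<Rightarrow> real^'n" and \<mu> where orth: "\<forall>i j. v i \<bullet> (A *v v j) = (if i = j then 1 else 0)"
    and eig: "\<forall>i. B *v v i = \<mu> i *\<^sub>R (A *v v i)"
    using gen_eig_set[OF A Bs, of UNIV] by auto
  define V :: "real^'n^'n" where "V = (\<chi> r j. v j $ r)"
  have h1: "transpose V ** A ** V = mat 1"
    unfolding vec_eq_iff V_def vtmv using orth by (simp add: mat_def)
  define D :: "real^'n^'n" where "D = (\<chi> i j. if i = j then \<mu> i else 0)"
  have h2: "transpose V ** B ** V = D"
    unfolding vec_eq_iff V_def vtmv D_def using orth eig by (simp add: matrix_vector_mult_scaleR)
  have mupos: "\<mu> i > 0" for i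
  proof -
    have "v i \<noteq> 0" using orth by (metis inner_zero_left zero_neq_one)
    hence "v i \<bullet> (B *v v i) > 0" using B by (simp add: pos_def_def)
    thus ?thesis using eig orth by (simp add: matrix_vector_mult_scaleR)
  qed
  have d1: "det V * det V * det A = 1"
    using arg_cong[OF h1, of det] by (simp add: det_mul mult_ac)
  have d2: "det V * det V * det B = prod \<mu> UNIV"
    using arg_cong[OF h2, of det] by (simp add: det_mul det_diagonal D_def mult_ac)
  have dV0: "det V \<noteq> 0" using d1 by auto
  have dV: "det V * det V > 0" using dV0 not_real_square_gt_zero by blast
  have dA': "det A = 1 / (det V * det V)" using d1 dV0 by (simp add: eq_divide_eq mult_ac)
  have dA: "det A > 0" using dA' dV by simp
  have dB': "det B = prod \<mu> UNIV / (det V * det V)" using d2 dV0 by (simp add: eq_divide_eq mult_ac)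
  have dB: "det B = det A * prod \<mu> UNIV" using dA' dB' by simp
  have "transpose V ** (A ** V) = mat 1" using h1 by (simp add: matrix_mul_assoc)
  hence "(A ** V) ** transpose V = mat 1" using matrix_left_right_inverse by blast
  hence "A ** (V ** transpose V) = mat 1" by (simp add: matrix_mul_assoc)
  hence inv: "matrix_inv A = V ** transpose V" by (rule inv_unique[OF A])
  have "trace (matrix_inv A ** B) = trace (V ** (transpose V ** B))" by (simp add: inv matrix_mul_assoc)
  also have "\<dots> = trace (transpose V ** B ** V)" by (rule trace_mul_sym)
  also have "\<dots> = sum \<mu> UNIV" by (simp add: h2 D_def trace_def)
  finally have tr: "trace (matrix_inv A ** B) = sum \<mu> UNIV" .
  have q: "d \<bullet> (matrix_inv A *v d) \<ge> 0" for d
  proof -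
    have "d \<bullet> (matrix_inv A *v d) = d \<bullet> (V *v (transpose V *v d))" by (simp only: inv matrix_vector_mul_assoc)
    also have "\<dots> = (transpose V *v d) \<bullet> (transpose V *v d)" using dot_lmul_matrix[of d V "transpose V *v d"] by simp
    finally show ?thesis by simp
  qed
  show ?thesis apply (rule exI[of _ \<mu>]) using mupos dA dB tr q by blast
qed



lemma exists_t: assumes "a > (0::real)" shows "\<exists>t>1. t - ln t = 1 + a"
proof -
  define s where "s = 2 * a + 2"
  have s0: "s > 0" using assms by (simp add: s_def)
  have "exp (s/2) \<ge> 1 + s/2" by (rule exp_ge_add_one_self)
  hence "exp (s/2) * exp (s/2) \<ge> (1 + s/2) * (1 + s/2)" using s0 by (intro mult_mono) auto
  hence "exp s \<ge> 1 + s + s * s / 4" by (simp add: exp_add[symmetric] algebra_simps)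
  moreover have "s * s / 4 \<ge> a" using assms by (simp add: s_def algebra_simps power2_eq_square)
  ultimately have hT: "exp s - ln (exp s) \<ge> 1 + a" by simp
  have "continuous_on {1..exp s} (\<lambda>x. x - ln x)" by (intro continuous_intros) auto
  moreover have "1 \<le> exp s" using s0 by simp
  ultimately obtain t where t: "t \<ge> 1" "t \<le> exp s" "t - ln t = 1 + a"
    using IVT'[of "\<lambda>x. x - ln x" 1 "1 + a" "exp s"] hT assms by auto
  have "t \<noteq> 1" using t assms by auto
  thus ?thesis using t by (intro exI[of _ t]) auto
qed

lemma W_val: fixes a :: real assumes a: "a > 0"
  shows "\<exists>t>1. t - ln t = 1 + a \<and> wright_omega (- complex_of_real a - 1 - \<i> * complex_of_real pi) = complex_of_real (-t)"
proof -
  obtain t where t1: "t > 1" and ht: "t - ln t = 1 + a" using exists_t[OF a] by blast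
  define z where "z = - complex_of_real a - 1 - \<i> * complex_of_real pi"
  have Imz: "Im z = - pi" and Rez: "Re z = - a - 1" by (simp_all add: z_def)
  have ceil: "ceiling ((Im z - pi) / (2 * pi)) = -1" using Imz by (simp add: ceiling_minus)
  have expz: "exp z = complex_of_real (- exp (- a - 1))"
    by (simp add: exp_eq_polar Rez Imz cis.ctr complex_eq_iff)
  define c where "c = - exp (- a - 1)"
  have cc: "- exp (-1) \<le> c" "c < 0" using a by (auto simp: c_def)
  have the: "(THE w::real. w \<le> -1 \<and> w * exp w = c) = - t"
  proof (rule the_equality)
    have "t * exp (- t) = exp (ln t - t)" using t1 by (simp add: exp_diff exp_minus divide_inverse)
    also have "\<dots> = exp (- a - 1)" using ht by (simp add: algebra_simps)
    finally show "- t \<le> -1 \<and> - t * exp (- t) = c" using t1 by (simp add: c_def)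
  next
    fix w :: real assume w: "w \<le> -1 \<and> w * exp w = c"
    define t' where "t' = - w"
    have t'1: "t' \<ge> 1" using w by (simp add: t'_def)
    have "t' * exp (- t') = exp (- a - 1)" using w by (simp add: t'_def c_def)
    hence "ln (t' * exp (- t')) = - a - 1" by simp
    hence "ln t' - t' = - a - 1" using t'1 by (simp add: ln_mult)
    hence ht': "t' - ln t' = t - ln t" using ht by simp
    have "t' = t"
    proof (rule ccontr)
      assume "t' \<noteq> t"
      hence "t' < t \<or> t < t'" by auto
      thus False using h_mono[of t' t] h_mono[of t t'] t'1 t1 ht' by auto
    qed
    thus "w = - t" by (simp add: t'_def)
  qed
  have "wright_omega z = complex_of_real (- t)"
    unfolding wright_omega_def ceil expz lambertW_branch_def using cc the by (simp add: c_def)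
  thus ?thesis using t1 ht unfolding z_def by blast
qed

lemma det_scale: "det (t *\<^sub>R (A::real^'n^'n)) = t ^ CARD('n) * det A"
proof -
  have "t *\<^sub>R A = matrix ((*\<^sub>R) t) ** A"
    by (simp add: matrix_scaleR vec_eq_iff matrix_matrix_mult_def mat_def if_distrib if_distribR sum.delta cong: if_cong)
  thus ?thesis by (simp add: det_mul det_matrix_scaleR)
qed



lemma trace_scale: "trace (c *\<^sub>R (M::real^'n^'n)) = c * trace M"
  by (simp add: trace_def sum_distrib_left)

theorem theorem1:
  fixes mu_c :: "real^'n" and S_c :: "real^'n^'n" and eps b :: real
  assumes "pos_def S_c" and "eps > 0"
  defines "W \<equiv> wright_omega (- complex_of_real (4 * eps^2 / real CARD('n)) - 1 - \<i> * complex_of_real pi)"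
  shows "Im W = 0
    \<and> (let mu_m = (0::real^'n); S_m = (- Re W - 1) *\<^sub>R S_c
       in pos_def S_m
        \<and> pos_def (S_c + S_m)
        \<and> cmqgd_KL (mu_c + mu_m) (S_c + S_m) mu_c S_c \<le> 2 * eps^2
        \<and> (\<forall>mu_m' S_m'. pos_def (S_c + S_m') \<and>
              cmqgd_KL (mu_c + mu_m') (S_c + S_m') mu_c S_c \<le> 2 * eps^2 \<longrightarrow>
              cmqgd_entropy b (S_c + S_m') \<le> cmqgd_entropy b (S_c + S_m))
        \<and> cmqgd_entropy b (S_c + S_m) - cmqgd_entropy b S_c
            = real CARD('n) / 2 * ln (- Re W))"
proof -
  define N where "N = real CARD('n)"
  have N0: "N > 0" by (simp add: N_def)
  define a where "a = 4 * eps^2 / real CARD('n)"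
  have a0: "a > 0" using assms(2) by (simp add: a_def)
  have aN: "N * a = 4 * eps^2" using N0 by (simp add: a_def N_def)
  obtain t where t1: "t > 1" and ht: "t - ln t = 1 + a" and Wt: "W = complex_of_real (-t)"
    using W_val[OF a0] unfolding W_def a_def by blast
  have ReW: "Re W = -t" "Im W = 0" using Wt by simp_all
  have Apd: "pos_def S_c" by fact
  have As: "transpose S_c = S_c" and Apos: "\<And>x. x \<noteq> 0 \<Longrightarrow> x \<bullet> (S_c *v x) > 0"
    using Apd by (auto simp: pos_def_def)
  define Sm where "Sm = (t - 1) *\<^sub>R S_c"
  have SmE: "(- Re W - 1) *\<^sub>R S_c = Sm" by (simp add: ReW Sm_def)
  have sumE: "S_c + Sm = t *\<^sub>R S_c" by (simp add: Sm_def algebra_simps)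
  have pdscale: "pos_def (c *\<^sub>R S_c)" if c: "c > 0" for c
    unfolding pos_def_def using As Apos c
    by (simp add: transpose_scalar scaleR_matrix_vector_assoc[symmetric])
  obtain \<mu>0 :: "'n \<Rightarrow> real" where "det S_c > 0" using gen_eig_mat[OF Apd Apd] by blast
  hence dA: "det S_c > 0" .
  have dtA: "det (t *\<^sub>R S_c) = t ^ CARD('n) * det S_c" by (rule det_scale)
  have tn: "t ^ CARD('n) > 0" using t1 by simp
  have lntn: "ln (t ^ CARD('n)) = N * ln t" using t1 by (simp add: ln_realpow N_def)
  have KLeq: "cmqgd_KL (mu_c + 0) (t *\<^sub>R S_c) mu_c S_c = N * (t - ln t - 1) / 2"
  proof -
    have tr: "trace (matrix_inv S_c ** (t *\<^sub>R S_c)) = t * N"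
    proof -
      have "matrix_inv S_c ** (t *\<^sub>R S_c) = t *\<^sub>R (matrix_inv S_c ** S_c)"
        by (simp only: matrix_scalar_ac scalar_matrix_assoc)
      thus ?thesis by (simp add: trace_scale pos_def_inv[OF Apd] trace_I N_def)
    qed
    have "det S_c / det (t *\<^sub>R S_c) = 1 / t ^ CARD('n)" using dA dtA by simp
    hence ld: "ln (det S_c / det (t *\<^sub>R S_c)) = - (N * ln t)" using tn lntn by (simp add: ln_div)
    show ?thesis unfolding cmqgd_KL_def tr ld by (simp add: N_def algebra_simps)
  qed
  have KLval: "N * (t - ln t - 1) / 2 = 2 * eps^2" using ht aN by simp
  have entt: "cmqgd_entropy b (t *\<^sub>R S_c) = (ln (2 * pi * exp 1 * det S_c) + N * ln t) / 2 + b"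
  proof -
    have "ln (2 * pi * exp 1 * det (t *\<^sub>R S_c)) = ln (t ^ CARD('n)) + ln (2 * pi * exp 1 * det S_c)"
    proof -
      have "2 * pi * exp 1 * det (t *\<^sub>R S_c) = t ^ CARD('n) * (2 * pi * exp 1 * det S_c)"
        unfolding dtA by (simp add: mult_ac)
      also have "ln \<dots> = ln (t ^ CARD('n)) + ln (2 * pi * exp 1 * det S_c)"
        using tn dA by (intro ln_mult_pos) auto
      finally show ?thesis .
    qed
    thus ?thesis unfolding cmqgd_entropy_def lntn by simp
  qed
  have opt: "cmqgd_entropy b (S_c + S') \<le> cmqgd_entropy b (t *\<^sub>R S_c)"
    if Bpd: "pos_def (S_c + S')" and KL: "cmqgd_KL (mu_c + m') (S_c + S') mu_c S_c \<le> 2 * eps^2" for m' S'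
  proof -
    define B where "B = S_c + S'"
    obtain \<mu> :: "'n \<Rightarrow> real" where mup: "\<forall>i. \<mu> i > 0" and dB: "det B = det S_c * prod \<mu> UNIV"
      and tr: "trace (matrix_inv S_c ** B) = sum \<mu> UNIV" and q: "\<forall>d. d \<bullet> (matrix_inv S_c *v d) \<ge> 0"
      using gen_eig_mat[OF Apd Bpd[folded B_def]] by blast
    have pp: "prod \<mu> UNIV > 0" using mup by (simp add: prod_pos)
    have lnp: "ln (prod \<mu> UNIV) = (\<Sum>i\<in>UNIV. ln (\<mu> i))" using mup by (intro ln_prod) (auto simp: less_le)
    have "ln (det S_c / det B) = - (\<Sum>i\<in>UNIV. ln (\<mu> i))"
    proof -
      have "det S_c / det B = inverse (prod \<mu> UNIV)" using dA by (simp add: dB field_simps)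
      thus ?thesis using pp lnp by (simp add: ln_inverse)
    qed
    hence "(sum \<mu> UNIV + (mu_c - (mu_c + m')) \<bullet> (matrix_inv S_c *v (mu_c - (mu_c + m')))
            - (\<Sum>i\<in>UNIV. ln (\<mu> i)) - N) / 2 \<le> 2 * eps^2"
      using KL unfolding cmqgd_KL_def B_def[symmetric] tr N_def by simp
    hence "sum \<mu> UNIV - (\<Sum>i\<in>UNIV. ln (\<mu> i)) - real (card (UNIV::'n set)) \<le> real (card (UNIV::'n set)) * (t - ln t - 1)"
      using q[rule_format, of "mu_c - (mu_c + m')"] KLval by (simp add: N_def)
    from amgm_log[OF _ _ _ _ this] mup t1
    have "(\<Sum>i\<in>UNIV. ln (\<mu> i)) \<le> N * ln t" by (simp add: N_def)
    hence "ln (prod \<mu> UNIV) \<le> ln (t ^ CARD('n))" using lnp lntn by simp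
    hence "prod \<mu> UNIV \<le> t ^ CARD('n)" using pp tn by simp
    hence "det B \<le> det (t *\<^sub>R S_c)" using dA by (simp add: dB dtA mult_left_mono mult.commute)
    moreover have "det B > 0" using dB dA pp by simp
    ultimately show ?thesis unfolding cmqgd_entropy_def B_def by simp
  qed
  show ?thesis
    unfolding Let_def SmE sumE
  proof (intro conjI allI impI)
    show "Im W = 0" by (rule ReW(2))
    show "pos_def Sm" unfolding Sm_def using t1 by (intro pdscale) simp
    show "pos_def (t *\<^sub>R S_c)" using t1 by (intro pdscale) simp
    show "cmqgd_KL (mu_c + 0) (t *\<^sub>R S_c) mu_c S_c \<le> 2 * eps^2" using KLeq KLval by simp
    show "cmqgd_entropy b (S_c + S') \<le> cmqgd_entropy b (t *\<^sub>R S_c)"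
      if "pos_def (S_c + S') \<and> cmqgd_KL (mu_c + m') (S_c + S') mu_c S_c \<le> 2 * eps^2" for m' S'
      using opt that by blast
    show "cmqgd_entropy b (t *\<^sub>R S_c) - cmqgd_entropy b S_c = real CARD('n) / 2 * ln (- Re W)"
      unfolding entt by (simp add: cmqgd_entropy_def ReW N_def field_simps)
  qed
qed


end
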